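(* Let $\mathcal D$ be a dyadic grid in $\mathbf R^d$, $w\in A_{\mathrm{FW}}(\mathcal D)$, $\mathcal S\subseteq\mathcal D$ an $\eta$-sparse collection, $Q_0\in\mathcal S$, and $h_{\mathcal S(Q_0)}:=\sum_{Q\in\mathcal S,\,Q\subseteq Q_0}\mathbf 1_Q$. Then there exists $\delta>0$, depending only on $d$, such that \[ w\big(\{x\in Q_0:h_{\mathcal S(Q_0)}(x)>\lambda\}\big)\lesssim e^{-\frac{\eta\delta}{[w]_{\mathrm{FW}}}\lambda}\,w(Q_0) \] for all $\lambda>0$, with implicit constant depending only on $d$.
   Context: A dyadic grid is $\mathcal D^\alpha=\{2^{-j}([0,1)^d+\alpha+k):j\in\mathbf Z,k\in\mathbf Z^d\}$, $\alpha\in\{0,\frac13,\frac23\}^d$. $\mathcal S$ is $\eta$-sparse if each $Q\in\mathcal S$ has $E_Q\subseteq Q$ with $|E_Q|\ge\eta|Q|$ and $\{E_Q\}$ pairwise disjoint. For a weight $w$, $[w]_{\mathrm{FW}}$ here denotes the dyadic Fujii–Wilson constant $\sup_{Q\in\mathcal D}\frac1{w(Q)}\int_QM(w\mathbf 1_Q)\,dx$ ($M$ the Hardy–Littlewood maximal operator), and $w\in A_{\mathrm{FW}}(\mathcal D)$ means it is finite. *)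

theory Defs
  imports "HOL-Analysis.Analysis"
begin

definition dyadic_cube :: "real^'n \<Rightarrow> int \<Rightarrow> ('n \<Rightarrow> int) \<Rightarrow> (real^'n) set" where
  "dyadic_cube \<alpha> j k = {x. \<forall>i. 2 powr (- real_of_int j) * (\<alpha>$i + real_of_int (k i)) \<le> x$i
        \<and> x$i < 2 powr (- real_of_int j) * (\<alpha>$i + real_of_int (k i) + 1)}"

definition dyadic_grid :: "real^'n \<Rightarrow> (real^'n) set set" where
  "dyadic_grid \<alpha> = {dyadic_cube \<alpha> j k | j k. True}"

definition admissible_shift :: "real^'n \<Rightarrow> bool" where
  "admissible_shift \<alpha> \<longleftrightarrow> (\<forall>i. \<alpha>$i \<in> {0, 1/3, 2/3})"

definition is_weight :: "(real^'n \<Rightarrow> real) \<Rightarrow> bool" where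
  "is_weight w \<longleftrightarrow> w \<in> borel_measurable lebesgue \<and> (\<forall>x. 0 \<le> w x)
     \<and> (\<forall>r. set_integrable lebesgue (cball 0 r) w)"

definition wmeas :: "(real^'n \<Rightarrow> real) \<Rightarrow> (real^'n) set \<Rightarrow> ennreal" where
  "wmeas w E = (\<integral>\<^sup>+x\<in>E. ennreal (w x) \<partial>lebesgue)"

definition hl_max :: "(real^'n \<Rightarrow> real) \<Rightarrow> real^'n \<Rightarrow> ennreal" where
  "hl_max f x = (SUP cr\<in>{(c, r). 0 < r \<and> x \<in> ball c r}.
      (\<integral>\<^sup>+y\<in>ball (fst cr) (snd cr). ennreal \<bar>f y\<bar> \<partial>lebesgue) / emeasure lebesgue (ball (fst cr) (snd cr)))"

definition fw_const :: "real^'n \<Rightarrow> (real^'n \<Rightarrow> real) \<Rightarrow> ennreal" where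
  "fw_const \<alpha> w = (SUP Q\<in>dyadic_grid \<alpha>.
      (\<integral>\<^sup>+x\<in>Q. hl_max (\<lambda>y. indicator Q y * w y) x \<partial>lebesgue) / wmeas w Q)"

definition sparse :: "real \<Rightarrow> (real^'n) set set \<Rightarrow> bool" where
  "sparse \<eta> S \<longleftrightarrow> (\<exists>E. (\<forall>Q\<in>S. E Q \<subseteq> Q \<and> E Q \<in> sets lebesgue
        \<and> ennreal \<eta> * emeasure lebesgue Q \<le> emeasure lebesgue (E Q))
     \<and> (\<forall>Q\<in>S. \<forall>Q'\<in>S. Q \<noteq> Q' \<longrightarrow> E Q \<inter> E Q' = {}))"

definition h_count :: "(real^'n) set set \<Rightarrow> (real^'n) set \<Rightarrow> real^'n \<Rightarrow> ennreal" where
  "h_count S Q0 x = (\<Sum>\<^sub>\<infinity>Q\<in>{Q\<in>S. Q \<subseteq> Q0}. indicator Q x)"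

end

theory Submission
  imports Defs
begin

definition hs :: "'a set set \<Rightarrow> 'a \<Rightarrow> real" where
  "hs F x = (\<Sum>Q\<in>F. indicator Q x)"

definition laminar :: "'a set set \<Rightarrow> bool" where
  "laminar F \<longleftrightarrow> (\<forall>A\<in>F. \<forall>B\<in>F. A \<inter> B \<noteq> {} \<longrightarrow> A \<subseteq> B \<or> B \<subseteq> A)"

lemma chain_exp:
  fixes C :: "'a set set" and s :: real
  assumes "finite C" "\<forall>A\<in>C. \<forall>B\<in>C. A \<subseteq> B \<or> B \<subseteq> A"
  shows "exp (s * card C) = 1 + (1 - exp (-s)) * (\<Sum>Q\<in>C. exp (s * card {Q'\<in>C. Q' \<subseteq> Q}))"
  using assms
proof (induct "card C" arbitrary: C)
  case 0
  then show ?case by simp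
next
  case (Suc n)
  then have ne: "C \<noteq> {}" by auto
  obtain m where m: "m \<in> C" "\<forall>b\<in>C. m \<subseteq> b \<longrightarrow> m = b"
    using finite_has_maximal[OF Suc(3) ne] by blast
  have mall: "\<forall>b\<in>C. b \<subseteq> m" using m Suc(4) by blast
  define C' where "C' = C - {m}"
  have cC': "card C' = n" using Suc(2) m(1) Suc(3) unfolding C'_def by simp
  have IH: "exp (s * card C') = 1 + (1 - exp (-s)) * (\<Sum>Q\<in>C'. exp (s * card {Q'\<in>C'. Q' \<subseteq> Q}))"
    using Suc(1)[OF cC'[symmetric]] Suc(3,4) unfolding C'_def by auto
  have eq1: "{Q'\<in>C. Q' \<subseteq> Q} = {Q'\<in>C'. Q' \<subseteq> Q}" if "Q \<in> C'" for Q
    using that m mall unfolding C'_def by blast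
  have eq2: "{Q'\<in>C. Q' \<subseteq> m} = C" using mall by blast
  have "(\<Sum>Q\<in>C. exp (s * card {Q'\<in>C. Q' \<subseteq> Q})) =
        exp (s * card C) + (\<Sum>Q\<in>C'. exp (s * card {Q'\<in>C. Q' \<subseteq> Q}))"
    using Suc(3) m(1) eq2 unfolding C'_def by (simp add: sum.remove)
  also have "\<dots> = exp (s * card C) + (\<Sum>Q\<in>C'. exp (s * card {Q'\<in>C'. Q' \<subseteq> Q}))"
    using eq1 by simp
  finally have S: "(\<Sum>Q\<in>C. exp (s * card {Q'\<in>C. Q' \<subseteq> Q})) =
        exp (s * card C) + (\<Sum>Q\<in>C'. exp (s * card {Q'\<in>C'. Q' \<subseteq> Q}))" .
  have cC: "card C = Suc n" using Suc(2) by simp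
  have e1: "exp (s * real (Suc n)) = exp s * exp (s * n)"
    by (simp add: exp_add[symmetric] algebra_simps)
  have e2: "exp (-s) * exp s = 1" by (simp add: exp_add[symmetric])
  define \<Sigma> where "\<Sigma> = (\<Sum>Q\<in>C'. exp (s * card {Q'\<in>C'. Q' \<subseteq> Q}))"
  have IH': "exp (s * n) = 1 + (1 - exp (-s)) * \<Sigma>" using IH cC' unfolding \<Sigma>_def by simp
  have "1 + (1 - exp (-s)) * (exp (s * real (Suc n)) + \<Sigma>)
      = (1 + (1 - exp (-s)) * \<Sigma>) + (1 - exp (-s)) * exp s * exp (s * n)"
    unfolding e1 by (simp only: algebra_simps)
  also have "\<dots> = exp (s * n) + exp s * exp (s * n) - (exp (-s) * exp s) * exp (s * n)"
    using IH' by (simp add: algebra_simps)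
  also have "\<dots> = exp (s * real (Suc n))" using e1 e2 by simp
  finally show ?case unfolding S cC \<Sigma>_def by simp
qed


lemma hs_card: "finite F \<Longrightarrow> hs F x = card {Q\<in>F. x\<in>Q}"
proof -
  assume "finite F"
  have "F \<inter> Collect ((\<in>) x) = {Q\<in>F. x\<in>Q}" by auto
  then show ?thesis unfolding hs_def using \<open>finite F\<close> by (simp add: indicator_def sum.If_cases)
qed

lemma hs_nonneg: "0 \<le> hs F x"
  unfolding hs_def by (simp add: sum_nonneg)

lemma hs_meas[measurable]: "(\<And>Q. Q \<in> F \<Longrightarrow> Q \<in> sets M) \<Longrightarrow> hs F \<in> borel_measurable M"
  unfolding hs_def by (intro borel_measurable_sum borel_measurable_indicator) auto

lemma pw:
  fixes s :: real
  assumes fin: "finite D" and lam: "laminar D"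
  shows "exp (s * hs D x) = 1 + (1 - exp (-s)) * (\<Sum>Q\<in>D. indicator Q x * exp (s * hs {Q'\<in>D. Q' \<subseteq> Q} x))"
proof -
  define C where "C = {Q\<in>D. x\<in>Q}"
  have finC: "finite C" using fin unfolding C_def by simp
  have ch: "\<forall>A\<in>C. \<forall>B\<in>C. A \<subseteq> B \<or> B \<subseteq> A"
    using lam unfolding C_def laminar_def by blast
  have h1: "hs D x = card C" using hs_card[OF fin] unfolding C_def by simp
  have h2: "hs {Q'\<in>D. Q' \<subseteq> Q} x = card {Q'\<in>C. Q' \<subseteq> Q}" for Q
  proof -
    have "hs {Q'\<in>D. Q' \<subseteq> Q} x = card {Q'\<in>{Q'\<in>D. Q' \<subseteq> Q}. x\<in>Q'}" using fin by (simp add: hs_card)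
    also have "{Q'\<in>{Q'\<in>D. Q' \<subseteq> Q}. x\<in>Q'} = {Q'\<in>C. Q' \<subseteq> Q}" unfolding C_def by blast
    finally show ?thesis .
  qed
  have h3: "(\<Sum>Q\<in>D. indicator Q x * exp (s * hs {Q'\<in>D. Q' \<subseteq> Q} x))
      = (\<Sum>Q\<in>C. exp (s * card {Q'\<in>C. Q' \<subseteq> Q}))"
  proof -
    have "(\<Sum>Q\<in>D. indicator Q x * exp (s * hs {Q'\<in>D. Q' \<subseteq> Q} x))
       = (\<Sum>Q\<in>D. if x \<in> Q then exp (s * card {Q'\<in>C. Q' \<subseteq> Q}) else 0)"
      unfolding h2 by (intro sum.cong) (auto simp: indicator_def)
    also have "\<dots> = (\<Sum>Q\<in>C. exp (s * card {Q'\<in>C. Q' \<subseteq> Q}))"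
      using sum.inter_filter[OF fin, of "\<lambda>Q. exp (s * card {Q'\<in>C. Q' \<subseteq> Q})" "\<lambda>Q. x \<in> Q"]
      unfolding C_def[symmetric] by simp
    finally show ?thesis .
  qed
  show ?thesis unfolding h1 h3 using chain_exp[OF finC ch] by simp
qed


lemma core_phi:
  fixes M :: "'a measure" and K s :: real
  assumes fin: "finite G" and sets: "\<And>Q. Q \<in> G \<Longrightarrow> Q \<in> sets M" and lam: "laminar G"
    and carl: "\<And>Q. Q \<in> G \<Longrightarrow> (\<Sum>Q'\<in>{Q'\<in>G. Q' \<subset> Q}. emeasure M Q') \<le> ennreal K * emeasure M Q"
    and K: "0 \<le> K" and s: "0 \<le> s" "exp s * (1 + 2*K) \<le> 2 + 2*K"
  shows "Q \<in> G \<Longrightarrow> (\<integral>\<^sup>+ x. ennreal (exp (s * hs {Q'\<in>G. Q' \<subseteq> Q} x)) * indicator Q x \<partial>M) \<le> 2 * emeasure M Q"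
proof (induct "card {Q'\<in>G. Q' \<subset> Q}" arbitrary: Q rule: less_induct)
  case less
  note QG = less(2)
  define D where "D = {Q'\<in>G. Q' \<subset> Q}"
  have finD: "finite D" using fin unfolding D_def by simp
  have lamD: "laminar D" using lam unfolding D_def laminar_def by blast
  have ins: "{Q'\<in>G. Q' \<subseteq> Q} = insert Q D" using QG unfolding D_def by blast
  have QnD: "Q \<notin> D" unfolding D_def by blast
  have subD: "{Q''\<in>D. Q'' \<subseteq> Q'} = {Q''\<in>G. Q'' \<subseteq> Q'}" if "Q' \<in> D" for Q'
    using that unfolding D_def by blast
  have es: "exp s * (1 - exp (-s)) = exp s - 1"
    by (simp add: algebra_simps exp_minus)
  have real_pt: "exp (s * hs {Q'\<in>G. Q' \<subseteq> Q} x) =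
      exp s + (exp s - 1) * (\<Sum>Q'\<in>D. indicator Q' x * exp (s * hs {Q''\<in>G. Q'' \<subseteq> Q'} x))"
    if "x \<in> Q" for x
  proof -
    have "hs {Q'\<in>G. Q' \<subseteq> Q} x = 1 + hs D x"
      unfolding ins hs_def using finD QnD that by simp
    then have "exp (s * hs {Q'\<in>G. Q' \<subseteq> Q} x) = exp s * exp (s * hs D x)"
      by (simp add: algebra_simps exp_add[symmetric])
    also have "\<dots> = exp s * (1 + (1 - exp (-s)) * (\<Sum>Q'\<in>D. indicator Q' x * exp (s * hs {Q''\<in>D. Q'' \<subseteq> Q'} x)))"
      using pw[OF finD lamD] by simp
    also have "(\<Sum>Q'\<in>D. indicator Q' x * exp (s * hs {Q''\<in>D. Q'' \<subseteq> Q'} x))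
        = (\<Sum>Q'\<in>D. indicator Q' x * exp (s * hs {Q''\<in>G. Q'' \<subseteq> Q'} x))"
      by (intro sum.cong) (auto simp: subD)
    also have "exp s * (1 + (1 - exp (-s)) * (\<Sum>Q'\<in>D. indicator Q' x * exp (s * hs {Q''\<in>G. Q'' \<subseteq> Q'} x)))
       = exp s + (exp s * (1 - exp (-s))) * (\<Sum>Q'\<in>D. indicator Q' x * exp (s * hs {Q''\<in>G. Q'' \<subseteq> Q'} x))"
      by (simp only: distrib_left mult_1_right mult.assoc)
    finally show ?thesis unfolding es .
  qed
  have subQ: "Q' \<subseteq> Q" if "Q' \<in> D" for Q' using that unfolding D_def by blast
  have es1: "0 \<le> exp s - 1" using s by simp
  have pt: "ennreal (exp (s * hs {Q'\<in>G. Q' \<subseteq> Q} x)) * indicator Q x =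
      ennreal (exp s) * indicator Q x +
      (\<Sum>Q'\<in>D. ennreal (exp s - 1) * (ennreal (exp (s * hs {Q''\<in>G. Q'' \<subseteq> Q'} x)) * indicator Q' x))" for x
  proof (cases "x \<in> Q")
    case True
    have "ennreal (exp s) * indicator Q x +
      (\<Sum>Q'\<in>D. ennreal (exp s - 1) * (ennreal (exp (s * hs {Q''\<in>G. Q'' \<subseteq> Q'} x)) * indicator Q' x))
      = ennreal (exp s) + (\<Sum>Q'\<in>D. ennreal ((exp s - 1) * (indicator Q' x * exp (s * hs {Q''\<in>G. Q'' \<subseteq> Q'} x))))"
      using True es1 by (intro arg_cong2[where f="(+)"] sum.cong refl)
         (auto simp: ennreal_mult ennreal_indicator[symmetric] mult.commute)
    also have "\<dots> = ennreal (exp s + (exp s - 1) * (\<Sum>Q'\<in>D. indicator Q' x * exp (s * hs {Q''\<in>G. Q'' \<subseteq> Q'} x)))"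
    proof -
      have nn: "0 \<le> (\<Sum>Q'\<in>D. (exp s - 1) * (indicator Q' x * exp (s * hs {Q''\<in>G. Q'' \<subseteq> Q'} x)))"
        using es1 by (intro sum_nonneg) auto
      show ?thesis
        using es1 nn by (subst sum_ennreal) (auto simp: sum_distrib_left ennreal_plus[symmetric] simp del: ennreal_plus)
    qed
    finally show ?thesis using True real_pt[OF True] by simp
  next
    case False
    then have "x \<notin> Q'" if "Q' \<in> D" for Q' using subQ that by blast
    then show ?thesis using False by simp
  qed
  have meas: "(\<lambda>x. ennreal (exp (s * hs F x)) * indicator A x) \<in> borel_measurable M"
    if "F \<subseteq> G" "A \<in> sets M" for F A
  proof -
    have "hs F \<in> borel_measurable M" using that sets by (intro hs_meas) auto
    then show ?thesis using that by measurable
  qed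
  have DG: "D \<subseteq> G" unfolding D_def by blast
  have "(\<integral>\<^sup>+ x. ennreal (exp (s * hs {Q'\<in>G. Q' \<subseteq> Q} x)) * indicator Q x \<partial>M)
      = (\<integral>\<^sup>+ x. ennreal (exp s) * indicator Q x \<partial>M) +
        (\<Sum>Q'\<in>D. \<integral>\<^sup>+ x. ennreal (exp s - 1) * (ennreal (exp (s * hs {Q''\<in>G. Q'' \<subseteq> Q'} x)) * indicator Q' x) \<partial>M)"
  proof -
    have m1: "(\<lambda>x. ennreal (exp s) * indicator Q x) \<in> borel_measurable M"
      using sets[OF QG] by measurable
    have m2: "(\<lambda>x. ennreal (exp s - 1) * (ennreal (exp (s * hs {Q''\<in>G. Q'' \<subseteq> Q'} x)) * indicator Q' x)) \<in> borel_measurable M"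
      if "Q' \<in> D" for Q'
      using that DG sets by (intro borel_measurable_times_ennreal borel_measurable_const meas) auto
    show ?thesis
      unfolding pt
      by (simp add: nn_integral_add[OF m1 borel_measurable_sum[OF m2]] nn_integral_sum[OF m2])
  qed
  also have "\<dots> = ennreal (exp s) * emeasure M Q +
      (\<Sum>Q'\<in>D. ennreal (exp s - 1) * (\<integral>\<^sup>+ x. ennreal (exp (s * hs {Q''\<in>G. Q'' \<subseteq> Q'} x)) * indicator Q' x \<partial>M))"
    apply (subst nn_integral_cmult_indicator)
     apply (simp add: sets QG)
    apply (intro arg_cong2[where f="(+)"] refl sum.cong)
    apply (subst nn_integral_cmult)
     apply (rule meas) using DG sets apply auto
    done
  also have "\<dots> \<le> ennreal (exp s) * emeasure M Q +
      (\<Sum>Q'\<in>D. ennreal (exp s - 1) * (2 * emeasure M Q'))"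
  proof -
    have "(\<integral>\<^sup>+ x. ennreal (exp (s * hs {Q''\<in>G. Q'' \<subseteq> Q'} x)) * indicator Q' x \<partial>M) \<le> 2 * emeasure M Q'"
      if "Q' \<in> D" for Q'
    proof (rule less(1))
      show "Q' \<in> G" using that DG by blast
      show "card {Q''\<in>G. Q'' \<subset> Q'} < card {Q'\<in>G. Q' \<subset> Q}"
      proof (rule psubset_card_mono)
        show "finite {Q'\<in>G. Q' \<subset> Q}" using fin by simp
        show "{Q''\<in>G. Q'' \<subset> Q'} \<subset> {Q'\<in>G. Q' \<subset> Q}"
          using that unfolding D_def by blast
      qed
    qed
    then show ?thesis by (intro add_left_mono sum_mono mult_left_mono) auto
  qed
  also have "\<dots> = ennreal (exp s) * emeasure M Q + ennreal (exp s - 1) * 2 * (\<Sum>Q'\<in>D. emeasure M Q')"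
    by (simp add: sum_distrib_left mult.assoc)
  also have "\<dots> \<le> ennreal (exp s) * emeasure M Q + ennreal (exp s - 1) * 2 * (ennreal K * emeasure M Q)"
    using carl[OF QG] unfolding D_def by (intro add_left_mono mult_left_mono) auto
  also have "\<dots> = ennreal (exp s + (exp s - 1) * 2 * K) * emeasure M Q"
  proof -
    have "ennreal (exp s + (exp s - 1) * 2 * K) = ennreal (exp s) + ennreal (exp s - 1) * 2 * ennreal K"
    proof -
      have a: "ennreal ((exp s - 1) * 2 * K) = ennreal (exp s - 1) * 2 * ennreal K"
        using es1 K ennreal_mult[of "(exp s - 1) * 2" K] ennreal_mult[of "exp s - 1" 2] by simp
      have b: "ennreal (exp s + (exp s - 1) * 2 * K) = ennreal (exp s) + ennreal ((exp s - 1) * 2 * K)"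
        using es1 K by (intro ennreal_plus) auto
      show ?thesis using a b by simp
    qed
    then show ?thesis by (simp add: distrib_right mult.assoc)
  qed
  also have "\<dots> \<le> ennreal 2 * emeasure M Q"
    using s by (intro mult_right_mono ennreal_leI) (auto simp: algebra_simps)
  finally show ?case by simp
qed


lemma core_total:
  fixes M :: "'a measure" and K s :: real
  assumes fin: "finite G" and sets: "\<And>Q. Q \<in> G \<Longrightarrow> Q \<in> sets M" and lam: "laminar G"
    and carl: "\<And>Q. Q \<in> G \<Longrightarrow> (\<Sum>Q'\<in>{Q'\<in>G. Q' \<subset> Q}. emeasure M Q') \<le> ennreal K * emeasure M Q"
    and K: "0 \<le> K" and s: "0 \<le> s" "exp s * (1 + 2*K) \<le> 2 + 2*K"
    and Q0: "Q0 \<in> sets M" and sub: "\<And>Q. Q \<in> G \<Longrightarrow> Q \<subseteq> Q0"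
    and tot: "(\<Sum>Q\<in>G. emeasure M Q) \<le> ennreal K * emeasure M Q0"
  shows "(\<integral>\<^sup>+ x. ennreal (exp (s * hs G x)) * indicator Q0 x \<partial>M) \<le> 2 * emeasure M Q0"
proof -
  have e0: "0 \<le> 1 - exp (-s)" using s by simp
  have pt: "ennreal (exp (s * hs G x)) * indicator Q0 x =
      indicator Q0 x + (\<Sum>Q\<in>G. ennreal (1 - exp (-s)) * (ennreal (exp (s * hs {Q'\<in>G. Q' \<subseteq> Q} x)) * indicator Q x))" for x
  proof (cases "x \<in> Q0")
    case True
    have nn: "0 \<le> (\<Sum>Q\<in>G. (1 - exp (-s)) * (indicator Q x * exp (s * hs {Q'\<in>G. Q' \<subseteq> Q} x)))"
      using e0 by (intro sum_nonneg) auto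
    have "indicator Q0 x + (\<Sum>Q\<in>G. ennreal (1 - exp (-s)) * (ennreal (exp (s * hs {Q'\<in>G. Q' \<subseteq> Q} x)) * indicator Q x))
       = ennreal 1 + (\<Sum>Q\<in>G. ennreal ((1 - exp (-s)) * (indicator Q x * exp (s * hs {Q'\<in>G. Q' \<subseteq> Q} x))))"
      using True e0 by (intro arg_cong2[where f="(+)"] sum.cong refl)
         (auto simp: ennreal_mult ennreal_indicator[symmetric] mult.commute)
    also have "\<dots> = ennreal (1 + (1 - exp (-s)) * (\<Sum>Q\<in>G. indicator Q x * exp (s * hs {Q'\<in>G. Q' \<subseteq> Q} x)))"
    proof -
      have c: "(\<Sum>Q\<in>G. ennreal ((1 - exp (-s)) * (indicator Q x * exp (s * hs {Q'\<in>G. Q' \<subseteq> Q} x))))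
          = ennreal (\<Sum>Q\<in>G. (1 - exp (-s)) * (indicator Q x * exp (s * hs {Q'\<in>G. Q' \<subseteq> Q} x)))"
        using e0 by (intro sum_ennreal) auto
      have d: "ennreal 1 + ennreal (\<Sum>Q\<in>G. (1 - exp (-s)) * (indicator Q x * exp (s * hs {Q'\<in>G. Q' \<subseteq> Q} x)))
         = ennreal (1 + (\<Sum>Q\<in>G. (1 - exp (-s)) * (indicator Q x * exp (s * hs {Q'\<in>G. Q' \<subseteq> Q} x))))"
        using nn by (intro ennreal_plus[symmetric]) auto
      show ?thesis unfolding c d by (simp add: sum_distrib_left)
    qed
    also have "\<dots> = ennreal (exp (s * hs G x))" using pw[OF fin lam, of s x] by simp
    finally show ?thesis using True by simp
  next
    case False
    then have "x \<notin> Q" if "Q \<in> G" for Q using sub that by blast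
    then show ?thesis using False by simp
  qed
  have meas: "(\<lambda>x. ennreal (exp (s * hs F x)) * indicator A x) \<in> borel_measurable M"
    if "F \<subseteq> G" "A \<in> sets M" for F A
  proof -
    have "hs F \<in> borel_measurable M" using that sets by (intro hs_meas) auto
    then show ?thesis using that by measurable
  qed
  have m1: "(\<lambda>x. indicator Q0 x :: ennreal) \<in> borel_measurable M" using Q0 by measurable
  have m2: "(\<lambda>x. ennreal (1 - exp (-s)) * (ennreal (exp (s * hs {Q'\<in>G. Q' \<subseteq> Q} x)) * indicator Q x)) \<in> borel_measurable M"
    if "Q \<in> G" for Q
    using that sets by (intro borel_measurable_times_ennreal borel_measurable_const meas) auto
  have "(\<integral>\<^sup>+ x. ennreal (exp (s * hs G x)) * indicator Q0 x \<partial>M)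
      = emeasure M Q0 + (\<Sum>Q\<in>G. ennreal (1 - exp (-s)) * (\<integral>\<^sup>+ x. ennreal (exp (s * hs {Q'\<in>G. Q' \<subseteq> Q} x)) * indicator Q x \<partial>M))"
  proof -
    have "(\<integral>\<^sup>+ x. ennreal (exp (s * hs G x)) * indicator Q0 x \<partial>M)
      = (\<integral>\<^sup>+ x. indicator Q0 x \<partial>M) + (\<Sum>Q\<in>G. \<integral>\<^sup>+ x. ennreal (1 - exp (-s)) * (ennreal (exp (s * hs {Q'\<in>G. Q' \<subseteq> Q} x)) * indicator Q x) \<partial>M)"
      unfolding pt by (simp only: nn_integral_add[OF m1 borel_measurable_sum[OF m2]] nn_integral_sum[OF m2])
    also have "\<dots> = emeasure M Q0 + (\<Sum>Q\<in>G. ennreal (1 - exp (-s)) * (\<integral>\<^sup>+ x. ennreal (exp (s * hs {Q'\<in>G. Q' \<subseteq> Q} x)) * indicator Q x \<partial>M))"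
      apply (intro arg_cong2[where f="(+)"] sum.cong refl nn_integral_cmult)
        apply (simp add: Q0)
      apply (rule meas) using sets apply auto
      done
    finally show ?thesis .
  qed
  also have "\<dots> \<le> emeasure M Q0 + (\<Sum>Q\<in>G. ennreal (1 - exp (-s)) * (2 * emeasure M Q))"
    using core_phi[OF fin sets lam carl K s] by (intro add_left_mono sum_mono mult_left_mono) auto
  also have "\<dots> = emeasure M Q0 + ennreal (1 - exp (-s)) * 2 * (\<Sum>Q\<in>G. emeasure M Q)"
    by (simp add: sum_distrib_left mult.assoc)
  also have "\<dots> \<le> emeasure M Q0 + ennreal (1 - exp (-s)) * 2 * (ennreal K * emeasure M Q0)"
    using tot by (intro add_left_mono mult_left_mono) auto
  also have "\<dots> = ennreal (1 + (1 - exp (-s)) * 2 * K) * emeasure M Q0"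
  proof -
    have a: "ennreal ((1 - exp (-s)) * 2 * K) = ennreal (1 - exp (-s)) * 2 * ennreal K"
      using e0 K ennreal_mult[of "(1 - exp (-s)) * 2" K] ennreal_mult[of "1 - exp (-s)" 2] by simp
    have b: "ennreal (1 + (1 - exp (-s)) * 2 * K) = ennreal 1 + ennreal ((1 - exp (-s)) * 2 * K)"
      using e0 K by (intro ennreal_plus) auto
    show ?thesis using a b by (simp add: distrib_right mult.assoc)
  qed
  also have "\<dots> \<le> ennreal 2 * emeasure M Q0"
  proof (intro mult_right_mono ennreal_leI)
    have es: "exp (-s) * exp s = 1" by (simp add: exp_add[symmetric])
    have "1 \<le> exp s" using s by simp
    moreover have "exp s + 2 * K * exp s \<le> 2 + 2 * K" using s(2) by (simp add: algebra_simps)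
    ultimately have "2 * K * exp s - 2 * K \<le> exp s" by linarith
    then have "2 * K * (exp s - 1) \<le> exp s" by (simp add: algebra_simps)
    then have le1: "2 * K * (exp s - 1) * exp (-s) \<le> exp s * exp (-s)" by (intro mult_right_mono) auto
    have es2: "exp s * exp (-s) = 1" by (simp add: exp_add[symmetric])
    have "2 * K * (exp s - 1) * exp (-s) = 2 * K * (exp s * exp (-s) - exp (-s))"
      by (simp only: algebra_simps)
    also have "\<dots> = 2 * K * (1 - exp (-s))" unfolding es2 ..
    finally have eq: "2 * K * (exp s - 1) * exp (-s) = 2 * K * (1 - exp (-s))" .
    have "2 * K * (1 - exp (-s)) \<le> 1" using le1 by (simp only: eq es2)
    then show "1 + (1 - exp (-s)) * 2 * K \<le> 2" by (simp add: algebra_simps)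
  qed auto
  finally show ?thesis by simp
qed

lemma core_markov:
  fixes M :: "'a measure" and K s t :: real
  assumes fin: "finite G" and sets: "\<And>Q. Q \<in> G \<Longrightarrow> Q \<in> sets M" and lam: "laminar G"
    and carl: "\<And>Q. Q \<in> G \<Longrightarrow> (\<Sum>Q'\<in>{Q'\<in>G. Q' \<subset> Q}. emeasure M Q') \<le> ennreal K * emeasure M Q"
    and K: "0 \<le> K" and s: "0 \<le> s" "exp s * (1 + 2*K) \<le> 2 + 2*K"
    and Q0: "Q0 \<in> sets M" and sub: "\<And>Q. Q \<in> G \<Longrightarrow> Q \<subseteq> Q0"
    and tot: "(\<Sum>Q\<in>G. emeasure M Q) \<le> ennreal K * emeasure M Q0"
  shows "ennreal (exp (s * t)) * emeasure M {x\<in>Q0. t < hs G x} \<le> 2 * emeasure M Q0"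
proof -
  have hm: "hs G \<in> borel_measurable M" using sets by (intro hs_meas) auto
  have A: "{x\<in>Q0. t < hs G x} = Q0 \<inter> {x\<in>space M. t < hs G x}"
    using sets.sets_into_space[OF Q0] by blast
  have Am: "{x\<in>Q0. t < hs G x} \<in> sets M" unfolding A using Q0 hm by measurable
  have "ennreal (exp (s * t)) * emeasure M {x\<in>Q0. t < hs G x}
      = (\<integral>\<^sup>+ x. ennreal (exp (s * t)) * indicator {x\<in>Q0. t < hs G x} x \<partial>M)"
    using Am by (simp add: nn_integral_cmult_indicator)
  also have "\<dots> \<le> (\<integral>\<^sup>+ x. ennreal (exp (s * hs G x)) * indicator Q0 x \<partial>M)"
  proof (intro nn_integral_mono)
    fix x
    show "ennreal (exp (s * t)) * indicator {x\<in>Q0. t < hs G x} x \<le> ennreal (exp (s * hs G x)) * indicator Q0 x"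
    proof (cases "x \<in> Q0 \<and> t < hs G x")
      case True
      then have "s * t \<le> s * hs G x" using s by (intro mult_left_mono) auto
      then show ?thesis using True by (simp add: ennreal_leI)
    qed auto
  qed
  also have "\<dots> \<le> 2 * emeasure M Q0" by (rule core_total[OF assms])
  finally show ?thesis .
qed


lemma cube_mem:
  "x \<in> dyadic_cube \<alpha> j k \<longleftrightarrow> (\<forall>i. \<lfloor>2 powr real_of_int j * x$i - \<alpha>$i\<rfloor> = k i)"
proof -
  define c where "c = 2 powr (- real_of_int j)"
  have c: "0 < c" unfolding c_def by simp
  have ci: "2 powr real_of_int j = 1 / c" unfolding c_def by (simp add: powr_minus_divide)
  have "(c * (\<alpha>$i + real_of_int (k i)) \<le> x$i \<and> x$i < c * (\<alpha>$i + real_of_int (k i) + 1))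
     \<longleftrightarrow> \<lfloor>2 powr real_of_int j * x$i - \<alpha>$i\<rfloor> = k i" for i
  proof -
    have "c * (\<alpha>$i + real_of_int (k i)) \<le> x$i \<longleftrightarrow> real_of_int (k i) \<le> x$i / c - \<alpha>$i"
      using c by (simp add: pos_le_divide_eq algebra_simps mult.commute)
    moreover have "x$i < c * (\<alpha>$i + real_of_int (k i) + 1) \<longleftrightarrow> x$i / c - \<alpha>$i < real_of_int (k i) + 1"
      using c by (simp add: pos_divide_less_eq algebra_simps mult.commute)
    ultimately show ?thesis unfolding ci by (simp add: floor_eq_iff)
  qed
  then show ?thesis unfolding dyadic_cube_def c_def by auto
qed

lemma floor_mult_eq:
  fixes u v :: real and p :: nat
  assumes p: "0 < p" and eq: "\<lfloor>real p * u\<rfloor> = \<lfloor>real p * v\<rfloor>"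
  shows "\<lfloor>u\<rfloor> = \<lfloor>v\<rfloor>"
proof -
  have *: "\<lfloor>u\<rfloor> \<le> \<lfloor>v\<rfloor>" if e: "\<lfloor>real p * u\<rfloor> = \<lfloor>real p * v\<rfloor>" for u v
  proof (rule ccontr)
    assume "\<not> \<lfloor>u\<rfloor> \<le> \<lfloor>v\<rfloor>"
    then have "v < of_int \<lfloor>u\<rfloor>" by (meson floor_less_iff not_le)
    moreover have "of_int \<lfloor>u\<rfloor> \<le> u" by simp
    ultimately have a: "real p * v < real p * of_int \<lfloor>u\<rfloor>" and b: "real p * of_int \<lfloor>u\<rfloor> \<le> real p * u"
      using p by (auto intro: mult_left_mono)
    have "real p * of_int \<lfloor>u\<rfloor> = of_int (int p * \<lfloor>u\<rfloor>)" by simp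
    then have "int p * \<lfloor>u\<rfloor> \<le> \<lfloor>real p * u\<rfloor>" using b by (metis le_floor_iff)
    moreover have "\<lfloor>real p * v\<rfloor> < int p * \<lfloor>u\<rfloor>"
      using a \<open>real p * of_int \<lfloor>u\<rfloor> = of_int (int p * \<lfloor>u\<rfloor>)\<close> by (metis floor_less_iff)
    ultimately show False using e by simp
  qed
  show ?thesis using *[OF eq] *[OF eq[symmetric]] by simp
qed

lemma four_pow_int: "\<exists>m::int. (4::real)^s - 1 = 3 * of_int m"
proof (induct s)
  case 0 then show ?case by (rule exI[of _ 0]) simp
next
  case (Suc s)
  then obtain m :: int where "(4::real)^s - 1 = 3 * of_int m" by blast
  then have "(4::real)^Suc s - 1 = 3 * of_int (4*m + 1)" by (simp add: algebra_simps)
  then show ?case by blast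
qed

lemma shift_int:
  assumes "a \<in> {0, 1/3, 2/3::real}"
  shows "\<exists>m::int. ((4::real)^s - 1) * a = of_int m"
proof -
  obtain m :: int where m: "(4::real)^s - 1 = 3 * of_int m" using four_pow_int by blast
  from assms consider "a = 0" | "a = 1/3" | "a = 2/3" by auto
  then show ?thesis
  proof cases
    case 1 then show ?thesis by (intro exI[of _ 0]) simp
  next
    case 2 then show ?thesis using m by (intro exI[of _ m]) simp
  next
    case 3 then show ?thesis using m by (intro exI[of _ "2*m"]) simp
  qed
qed

lemma floor_scale2:
  fixes a y x :: real and j :: int and s :: nat
  assumes a: "a \<in> {0, 1/3, 2/3::real}"
    and eq: "\<lfloor>2 powr real_of_int (j + 2 * int s) * y - a\<rfloor> = \<lfloor>2 powr real_of_int (j + 2 * int s) * x - a\<rfloor>"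
  shows "\<lfloor>2 powr real_of_int j * y - a\<rfloor> = \<lfloor>2 powr real_of_int j * x - a\<rfloor>"
proof -
  obtain m :: int where m: "((4::real)^s - 1) * a = of_int m" using shift_int[OF a] by blast
  have p: "2 powr real_of_int (j + 2 * int s) = (4::real)^s * 2 powr real_of_int j"
  proof -
    have "2 powr real_of_int (j + 2 * int s) = 2 powr real_of_int j * 2 powr (real (2 * s))"
      by (simp add: powr_add[symmetric])
    also have "2 powr (real (2 * s)) = (2::real) ^ (2 * s)" by (rule powr_realpow) simp
    also have "(2::real) ^ (2 * s) = 4 ^ s" by (simp add: power_mult)
    finally show ?thesis by simp
  qed
  have t: "2 powr real_of_int (j + 2 * int s) * z - a = real (4^s) * (2 powr real_of_int j * z - a) + of_int m" for z
    unfolding p using m[symmetric] by (simp add: algebra_simps)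
  have "\<lfloor>real (4^s) * (2 powr real_of_int j * y - a)\<rfloor> = \<lfloor>real (4^s) * (2 powr real_of_int j * x - a)\<rfloor>"
    using eq unfolding t by simp
  then show ?thesis by (rule floor_mult_eq[rotated]) simp
qed

lemma cube_nested:
  assumes adm: "admissible_shift \<alpha>"
    and x1: "x \<in> dyadic_cube \<alpha> j k" and x2: "x \<in> dyadic_cube \<alpha> (j + 2 * int s) k'"
  shows "dyadic_cube \<alpha> (j + 2 * int s) k' \<subseteq> dyadic_cube \<alpha> j k"
proof
  fix y assume y: "y \<in> dyadic_cube \<alpha> (j + 2 * int s) k'"
  show "y \<in> dyadic_cube \<alpha> j k"
    unfolding cube_mem
  proof
    fix i
    have a: "\<alpha>$i \<in> {0, 1/3, 2/3}" using adm unfolding admissible_shift_def by blast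
    have "\<lfloor>2 powr real_of_int (j + 2 * int s) * y$i - \<alpha>$i\<rfloor> = \<lfloor>2 powr real_of_int (j + 2 * int s) * x$i - \<alpha>$i\<rfloor>"
      using x2 y unfolding cube_mem by simp
    then have "\<lfloor>2 powr real_of_int j * y$i - \<alpha>$i\<rfloor> = \<lfloor>2 powr real_of_int j * x$i - \<alpha>$i\<rfloor>"
      by (rule floor_scale2[OF a])
    then show "\<lfloor>2 powr real_of_int j * y$i - \<alpha>$i\<rfloor> = k i" using x1 unfolding cube_mem by simp
  qed
qed

lemma cube_same_scale:
  assumes "x \<in> dyadic_cube \<alpha> j k" "x \<in> dyadic_cube \<alpha> j k'"
  shows "k = k'"
  using assms unfolding cube_mem by auto

definition scl :: "real^'n \<Rightarrow> (real^'n) set \<Rightarrow> int" where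
  "scl \<alpha> Q = fst (SOME p. Q = dyadic_cube \<alpha> (fst p) (snd p))"
definition idx :: "real^'n \<Rightarrow> (real^'n) set \<Rightarrow> 'n \<Rightarrow> int" where
  "idx \<alpha> Q = snd (SOME p. Q = dyadic_cube \<alpha> (fst p) (snd p))"

lemma grid_rep: "Q \<in> dyadic_grid \<alpha> \<Longrightarrow> Q = dyadic_cube \<alpha> (scl \<alpha> Q) (idx \<alpha> Q)"
proof -
  assume "Q \<in> dyadic_grid \<alpha>"
  then obtain j k where "Q = dyadic_cube \<alpha> j k" unfolding dyadic_grid_def by blast
  then have "\<exists>p. Q = dyadic_cube \<alpha> (fst p) (snd p)" by (intro exI[of _ "(j,k)"]) simp
  then show ?thesis unfolding scl_def idx_def by (rule someI_ex)
qed

lemma grid_laminar: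
  assumes adm: "admissible_shift \<alpha>" and Q: "Q \<in> dyadic_grid \<alpha>" and Q': "Q' \<in> dyadic_grid \<alpha>"
    and par: "even (scl \<alpha> Q) = even (scl \<alpha> Q')" and int: "Q \<inter> Q' \<noteq> {}"
  shows "Q \<subseteq> Q' \<or> Q' \<subseteq> Q"
proof -
  have *: "B \<subseteq> A" if A: "A \<in> dyadic_grid \<alpha>" and B: "B \<in> dyadic_grid \<alpha>"
    and p: "even (scl \<alpha> A) = even (scl \<alpha> B)" and i: "A \<inter> B \<noteq> {}" and le: "scl \<alpha> A \<le> scl \<alpha> B" for A B
  proof -
    obtain x where x: "x \<in> A" "x \<in> B" using i by blast
    define s where "s = nat ((scl \<alpha> B - scl \<alpha> A) div 2)"
    have "even (scl \<alpha> B - scl \<alpha> A)" using p by simp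
    then have sB: "scl \<alpha> B = scl \<alpha> A + 2 * int s" unfolding s_def using le by (auto elim!: evenE)
    have "B = dyadic_cube \<alpha> (scl \<alpha> A + 2 * int s) (idx \<alpha> B)" using grid_rep[OF B] sB by simp
    moreover have "A = dyadic_cube \<alpha> (scl \<alpha> A) (idx \<alpha> A)" using grid_rep[OF A] .
    ultimately show ?thesis using cube_nested[OF adm] x by metis
  qed
  show ?thesis
  proof (cases "scl \<alpha> Q \<le> scl \<alpha> Q'")
    case True then show ?thesis using *[OF Q Q' par int] by blast
  next
    case False then show ?thesis using *[OF Q' Q par[symmetric]] int by (metis inf_commute linear)
  qed
qed


definition cubeU :: "(real^'n) set" where
  "cubeU = {y. \<forall>i. 0 \<le> y$i \<and> y$i < 1}"
definition ctrU :: "real^'n" where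
  "ctrU = (\<chi> i. 1/2)"
definition rho :: "'n::finite itself \<Rightarrow> real" where
  "rho t = measure lebesgue (ball (ctrU::real^'n) (real CARD('n))) / measure lebesgue (cubeU :: (real^'n) set)"

lemma cube_sets: "dyadic_cube \<alpha> j k \<in> sets lebesgue"
proof -
  have "dyadic_cube \<alpha> j k \<in> sets lborel"
    unfolding dyadic_cube_def by measurable
  then show ?thesis by (simp add: sets_completionI_sets)
qed

lemma cubeU_sets: "(cubeU :: (real^'n) set) \<in> sets lebesgue"
proof -
  have "(cubeU :: (real^'n) set) \<in> sets lborel"
    unfolding cubeU_def by measurable
  then show ?thesis by (simp add: sets_completionI_sets)
qed

lemma cubeU_ball: "(cubeU :: (real^'n) set) \<subseteq> ball ctrU (real CARD('n))"
proof
  fix y :: "real^'n" assume y: "y \<in> cubeU"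
  have "norm (ctrU - y) \<le> (\<Sum>i\<in>UNIV. \<bar>(ctrU - y)$i\<bar>)" by (rule norm_le_l1_cart)
  also have "\<dots> \<le> (\<Sum>i\<in>(UNIV::'n set). 1/2)"
  proof (intro sum_mono)
    fix i
    have "0 \<le> y$i" "y$i < 1" using y unfolding cubeU_def by auto
    then show "\<bar>(ctrU - y)$i\<bar> \<le> 1/2" unfolding ctrU_def by (auto simp: abs_if)
  qed
  also have "\<dots> < real CARD('n)" by simp
  finally show "y \<in> ball ctrU (real CARD('n))" by (simp add: dist_norm)
qed

lemma ball_cubeU: "ball (ctrU :: real^'n) (1/2) \<subseteq> cubeU"
proof
  fix y :: "real^'n" assume y: "y \<in> ball ctrU (1/2)"
  have h: "\<bar>1/2 - y$i\<bar> < 1/2" for i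
    using component_le_norm_cart[of "ctrU - y" i] y by (simp add: dist_norm ctrU_def)
  have "0 \<le> y$i \<and> y$i < 1" for i using h[of i] by (auto simp: abs_if split: if_splits)
  then show "y \<in> cubeU" unfolding cubeU_def by simp
qed

lemma cubeU_pos: "0 < emeasure lebesgue (cubeU :: (real^'n) set)"
proof -
  have "0 < measure lborel (ball (ctrU :: real^'n) (1/2))" by (rule content_ball_pos) simp
  then have "0 < emeasure lebesgue (ball (ctrU :: real^'n) (1/2))"
    using emeasure_lborel_ball_finite[of "ctrU :: real^'n" "1/2"]
    by (simp add: emeasure_eq_ennreal_measure)
  also have "\<dots> \<le> emeasure lebesgue (cubeU :: (real^'n) set)"
    using ball_cubeU cubeU_sets by (intro emeasure_mono) auto
  finally show ?thesis .
qed

lemma cubeU_fin: "emeasure lebesgue (cubeU :: (real^'n) set) < \<infinity>"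
proof -
  have "emeasure lebesgue (cubeU :: (real^'n) set) \<le> emeasure lebesgue (ball (ctrU :: real^'n) (real CARD('n)))"
    using cubeU_ball by (intro emeasure_mono) auto
  also have "\<dots> < \<infinity>" using emeasure_lborel_ball_finite by simp
  finally show ?thesis .
qed

lemma cubeU_mpos: "0 < measure lebesgue (cubeU :: (real^'n) set)"
  unfolding measure_def using cubeU_pos[where 'n='n] cubeU_fin[where 'n='n] by (simp add: enn2real_positive_iff)

lemma rho_pos: "0 < rho TYPE('n::finite)"
proof -
  have a: "0 < measure lebesgue (cubeU :: (real^'n) set)"
    by (rule cubeU_mpos)
  have "measure lebesgue (cubeU :: (real^'n) set) \<le> measure lebesgue (ball (ctrU :: real^'n) (real CARD('n)))"
    using cubeU_ball emeasure_lborel_ball_finite cubeU_sets by (intro measure_mono_fmeasurable) (auto simp: fmeasurable_def)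
  then show ?thesis unfolding rho_def using a by simp
qed

lemma rho_eq: "emeasure lebesgue (ball (ctrU :: real^'n) (real CARD('n))) = ennreal (rho TYPE('n)) * emeasure lebesgue (cubeU :: (real^'n) set)"
proof -
  have a: "0 < measure lebesgue (cubeU :: (real^'n) set)"
    by (rule cubeU_mpos)
  have "emeasure lebesgue (ball (ctrU :: real^'n) (real CARD('n))) = ennreal (measure lebesgue (ball (ctrU :: real^'n) (real CARD('n))))"
    by (rule emeasure_eq_ennreal_measure) (use emeasure_lborel_ball_finite[of "ctrU :: real^'n" "real CARD('n)"] in simp)
  also have "\<dots> = ennreal (rho TYPE('n) * measure lebesgue (cubeU :: (real^'n) set))"
    unfolding rho_def using a by simp
  also have "\<dots> = ennreal (rho TYPE('n)) * emeasure lebesgue (cubeU :: (real^'n) set)"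
  proof -
    have "emeasure lebesgue (cubeU :: (real^'n) set) = ennreal (measure lebesgue (cubeU :: (real^'n) set))"
      by (rule emeasure_eq_ennreal_measure) (use cubeU_fin[where 'n='n] in simp)
    then show ?thesis using rho_pos[where 'n='n] by (simp add: ennreal_mult)
  qed
  finally show ?thesis .
qed

lemma cube_image:
  fixes \<alpha> :: "real^'n" and j :: int and k :: "'n \<Rightarrow> int"
  defines "c \<equiv> 2 powr (- real_of_int j)" and "v \<equiv> (\<chi> i. \<alpha>$i + real_of_int (k i))"
  shows "dyadic_cube \<alpha> j k = (\<lambda>y. c *\<^sub>R y + c *\<^sub>R v) ` cubeU"
proof -
  have c: "0 < c" unfolding c_def by simp
  show ?thesis
  proof (intro set_eqI iffI)
    fix x assume x: "x \<in> dyadic_cube \<alpha> j k"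
    define y where "y = (1/c) *\<^sub>R x - v"
    have "x = c *\<^sub>R y + c *\<^sub>R v" unfolding y_def using c by (simp add: algebra_simps)
    moreover have "y \<in> cubeU"
    proof -
      have "0 \<le> y$i \<and> y$i < 1" for i
      proof -
        have "c * (\<alpha>$i + real_of_int (k i)) \<le> x$i" "x$i < c * (\<alpha>$i + real_of_int (k i) + 1)"
          using x unfolding dyadic_cube_def c_def by auto
        then have "\<alpha>$i + real_of_int (k i) \<le> x$i / c" "x$i / c < \<alpha>$i + real_of_int (k i) + 1"
          using c by (simp_all add: pos_le_divide_eq pos_divide_less_eq mult.commute)
        then show ?thesis unfolding y_def v_def by simp
      qed
      then show ?thesis unfolding cubeU_def by simp
    qed
    ultimately show "x \<in> (\<lambda>y. c *\<^sub>R y + c *\<^sub>R v) ` cubeU" by blast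
  next
    fix x assume "x \<in> (\<lambda>y. c *\<^sub>R y + c *\<^sub>R v) ` cubeU"
    then obtain y where y: "y \<in> cubeU" and xy: "x = c *\<^sub>R y + c *\<^sub>R v" by blast
    have "c * (\<alpha>$i + real_of_int (k i)) \<le> x$i \<and> x$i < c * (\<alpha>$i + real_of_int (k i) + 1)" for i
    proof -
      have "0 \<le> y$i" "y$i < 1" using y unfolding cubeU_def by auto
      then have "0 \<le> c * y$i" "c * y$i < c" using c by auto
      then show ?thesis unfolding xy v_def by (simp add: algebra_simps)
    qed
    then show "x \<in> dyadic_cube \<alpha> j k" unfolding dyadic_cube_def c_def by simp
  qed
qed

lemma cube_props:
  fixes \<alpha> :: "real^'n"
  shows "0 < emeasure lebesgue (dyadic_cube \<alpha> j k)" "emeasure lebesgue (dyadic_cube \<alpha> j k) < \<infinity>"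
    "\<exists>z r. 0 < r \<and> dyadic_cube \<alpha> j k \<subseteq> ball z r \<and>
       emeasure lebesgue (ball z r) = ennreal (rho TYPE('n)) * emeasure lebesgue (dyadic_cube \<alpha> j k)"
proof -
  define c where "c = 2 powr (- real_of_int j)"
  define v where "v = (\<chi> i. \<alpha>$i + real_of_int (k i))"
  have c: "0 < c" unfolding c_def by simp
  have Q: "dyadic_cube \<alpha> j k = (\<lambda>y. c *\<^sub>R y + c *\<^sub>R v) ` cubeU" unfolding c_def v_def by (rule cube_image)
  have mQ: "emeasure lebesgue (dyadic_cube \<alpha> j k) = ennreal (c ^ CARD('n)) * emeasure lebesgue (cubeU :: (real^'n) set)"
    unfolding Q using emeasure_lebesgue_affine[of c "c *\<^sub>R v" "cubeU :: (real^'n) set"] c by simp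
  show "0 < emeasure lebesgue (dyadic_cube \<alpha> j k)" unfolding mQ using c cubeU_pos[where 'n='n]
    by (simp add: ennreal_zero_less_mult_iff)
  show "emeasure lebesgue (dyadic_cube \<alpha> j k) < \<infinity>" unfolding mQ using cubeU_fin[where 'n='n]
    by (simp add: ennreal_mult_less_top)
  define z where "z = c *\<^sub>R ctrU + c *\<^sub>R v"
  define r where "r = c * real CARD('n)"
  have r: "0 < r" unfolding r_def using c by simp
  have sub: "dyadic_cube \<alpha> j k \<subseteq> ball z r"
  proof
    fix x assume "x \<in> dyadic_cube \<alpha> j k"
    then obtain y where y: "y \<in> cubeU" and xy: "x = c *\<^sub>R y + c *\<^sub>R v" unfolding Q by blast
    have "dist ctrU y < real CARD('n)" using cubeU_ball y by auto
    then have "norm (ctrU - y) < real CARD('n)" by (simp add: dist_norm)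
    moreover have "dist z x = c * norm (ctrU - y)"
    proof -
      have "z - x = c *\<^sub>R (ctrU - y)" unfolding z_def xy by (simp add: scaleR_diff_right)
      then show ?thesis unfolding dist_norm using c by simp
    qed
    ultimately show "x \<in> ball z r" unfolding r_def using c by simp
  qed
  have "emeasure lebesgue (ball z r) = ennreal (r ^ CARD('n)) * emeasure lebesgue (ball (0::real^'n) 1)"
    using emeasure_lebesgue_ball_conv_unit_ball[of r z] r by simp
  also have "\<dots> = ennreal (c ^ CARD('n)) * (ennreal (real CARD('n) ^ CARD('n)) * emeasure lebesgue (ball (0::real^'n) 1))"
    unfolding r_def using c by (simp add: power_mult_distrib ennreal_mult mult.assoc)
  also have "ennreal (real CARD('n) ^ CARD('n)) * emeasure lebesgue (ball (0::real^'n) 1) = emeasure lebesgue (ball (ctrU::real^'n) (real CARD('n)))"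
    using emeasure_lebesgue_ball_conv_unit_ball[of "real CARD('n)" "ctrU::real^'n"] by simp
  also have "ennreal (c ^ CARD('n)) * \<dots> = ennreal (rho TYPE('n)) * emeasure lebesgue (dyadic_cube \<alpha> j k)"
    unfolding rho_eq mQ by (simp add: ac_simps)
  finally show "\<exists>z r. 0 < r \<and> dyadic_cube \<alpha> j k \<subseteq> ball z r \<and>
       emeasure lebesgue (ball z r) = ennreal (rho TYPE('n)) * emeasure lebesgue (dyadic_cube \<alpha> j k)"
    using r sub by blast
qed


lemma wmeas_alt: "wmeas w E = (\<integral>\<^sup>+ x. ennreal (w x) * indicator E x \<partial>lebesgue)"
  unfolding wmeas_def by simp

lemma wmeas_mono: "A \<subseteq> B \<Longrightarrow> wmeas w A \<le> wmeas w B"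
  unfolding wmeas_alt by (intro nn_integral_mono) (auto simp: indicator_def)

lemma wmeas_fin:
  assumes w: "is_weight w" and R: "R \<subseteq> cball 0 r"
  shows "wmeas w R < \<infinity>"
proof -
  have "set_integrable lebesgue (cball 0 r) w" using w unfolding is_weight_def by blast
  then have i: "integrable lebesgue (\<lambda>x. indicator (cball 0 r) x *\<^sub>R w x)" unfolding set_integrable_def .
  have "wmeas w R \<le> (\<integral>\<^sup>+ x. ennreal (indicator (cball 0 r) x *\<^sub>R w x) \<partial>lebesgue)"
    unfolding wmeas_alt using R w unfolding is_weight_def
    by (intro nn_integral_mono) (auto simp: indicator_def)
  also have "\<dots> < \<infinity>" using integrableD(2)[OF i] by (simp add: less_top)
  finally show ?thesis .
qed

lemma grid_bounded: "Q \<in> dyadic_grid (\<alpha>::real^'n) \<Longrightarrow> \<exists>r. Q \<subseteq> cball 0 r"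
proof -
  assume "Q \<in> dyadic_grid \<alpha>"
  then obtain j k where Q: "Q = dyadic_cube \<alpha> j k" unfolding dyadic_grid_def by blast
  obtain z r where "Q \<subseteq> ball z r" using cube_props(3)[of \<alpha> j k] Q by blast
  then have "Q \<subseteq> cball 0 (norm z + r)"
  proof (intro subsetI)
    fix x assume "Q \<subseteq> ball z r" "x \<in> Q"
    then have "dist z x < r" by auto
    moreover have "norm x \<le> norm z + dist z x"
      using norm_triangle_ineq[of z "x - z"] by (simp add: dist_norm norm_minus_commute)
    ultimately show "x \<in> cball 0 (norm z + r)" by simp
  qed
  then show ?thesis by blast
qed

lemma grid_wfin: "is_weight w \<Longrightarrow> Q \<in> dyadic_grid \<alpha> \<Longrightarrow> wmeas w Q < \<infinity>"
  using grid_bounded wmeas_fin by blast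

lemma grid_sets: "Q \<in> dyadic_grid \<alpha> \<Longrightarrow> Q \<in> sets lebesgue"
  unfolding dyadic_grid_def using cube_sets by blast

lemma fw_bound:
  assumes w: "is_weight w" and fw: "fw_const \<alpha> w < top" and R: "R \<in> dyadic_grid \<alpha>"
  shows "(\<integral>\<^sup>+x\<in>R. hl_max (\<lambda>y. indicator R y * w y) x \<partial>lebesgue) \<le> fw_const \<alpha> w * wmeas w R"
proof -
  define I where "I = (\<integral>\<^sup>+x\<in>R. hl_max (\<lambda>y. indicator R y * w y) x \<partial>lebesgue)"
  have le: "I / wmeas w R \<le> fw_const \<alpha> w"
    unfolding fw_const_def I_def using R by (intro SUP_upper)
  have fin: "wmeas w R < \<infinity>" using grid_wfin[OF w R] .
  show ?thesis
  proof (cases "wmeas w R = 0")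
    case True
    then have "I = 0 \<or> fw_const \<alpha> w = top" using le by (auto simp: top_unique split: if_splits)
    then show ?thesis using fw unfolding I_def by auto
  next
    case False
    have "I = I / wmeas w R * wmeas w R"
      using False fin by (simp add: ennreal_divide_times)
    also have "\<dots> \<le> fw_const \<alpha> w * wmeas w R" using le by (intro mult_right_mono) auto
    finally show ?thesis unfolding I_def .
  qed
qed

lemma hl_lower:
  assumes w: "is_weight w" and QR: "Q \<subseteq> R" and Qb: "Q \<subseteq> ball z r" and r: "0 < r" and x: "x \<in> Q"
  shows "wmeas w Q / emeasure lebesgue (ball z r) \<le> hl_max (\<lambda>y. indicator R y * w y) x"
proof -
  have "wmeas w Q \<le> (\<integral>\<^sup>+y\<in>ball z r. ennreal \<bar>indicator R y * w y\<bar> \<partial>lebesgue)"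
    unfolding wmeas_alt using QR Qb w unfolding is_weight_def
    by (intro nn_integral_mono) (auto simp: indicator_def)
  then have "wmeas w Q / emeasure lebesgue (ball z r) \<le>
      (\<integral>\<^sup>+y\<in>ball (fst (z,r)) (snd (z,r)). ennreal \<bar>indicator R y * w y\<bar> \<partial>lebesgue) / emeasure lebesgue (ball (fst (z,r)) (snd (z,r)))"
    by (simp add: divide_right_mono_ennreal)
  also have "\<dots> \<le> hl_max (\<lambda>y. indicator R y * w y) x"
    unfolding hl_max_def using r x Qb by (intro SUP_upper) auto
  finally show ?thesis .
qed


lemma carleson:
  fixes \<alpha> :: "real^'n" and w :: "real^'n \<Rightarrow> real"
  assumes w: "is_weight w" and fw: "fw_const \<alpha> w < top" and eta: "0 < \<eta>"
    and E: "\<And>Q. Q \<in> S \<Longrightarrow> E Q \<subseteq> Q \<and> E Q \<in> sets lebesgue \<and> ennreal \<eta> * emeasure lebesgue Q \<le> emeasure lebesgue (E Q)"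
    and disj: "\<And>Q Q'. Q \<in> S \<Longrightarrow> Q' \<in> S \<Longrightarrow> Q \<noteq> Q' \<Longrightarrow> E Q \<inter> E Q' = {}"
    and SG: "S \<subseteq> dyadic_grid \<alpha>" and fin: "finite G" and GS: "G \<subseteq> S"
    and R: "R \<in> dyadic_grid \<alpha>" and sub: "\<And>Q. Q \<in> G \<Longrightarrow> Q \<subseteq> R"
  shows "ennreal \<eta> * (\<Sum>Q\<in>G. wmeas w Q) \<le> ennreal (rho TYPE('n)) * (fw_const \<alpha> w * wmeas w R)"
proof -
  have "\<forall>Q\<in>G. \<exists>zr. 0 < snd zr \<and> Q \<subseteq> ball (fst zr) (snd zr) \<and>
       emeasure lebesgue (ball (fst zr) (snd zr)) = ennreal (rho TYPE('n)) * emeasure lebesgue Q"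
  proof
    fix Q assume "Q \<in> G"
    then have "Q \<in> dyadic_grid \<alpha>" using GS SG by blast
    then obtain j k where Q: "Q = dyadic_cube \<alpha> j k" unfolding dyadic_grid_def by blast
    show "\<exists>zr. 0 < snd zr \<and> Q \<subseteq> ball (fst zr) (snd zr) \<and>
       emeasure lebesgue (ball (fst zr) (snd zr)) = ennreal (rho TYPE('n)) * emeasure lebesgue Q"
      using cube_props(3)[of \<alpha> j k] unfolding Q by auto
  qed
  then obtain zr where zr: "\<And>Q. Q \<in> G \<Longrightarrow> 0 < snd (zr Q) \<and> Q \<subseteq> ball (fst (zr Q)) (snd (zr Q)) \<and>
       emeasure lebesgue (ball (fst (zr Q)) (snd (zr Q))) = ennreal (rho TYPE('n)) * emeasure lebesgue Q"
    by metis
  define B where "B Q = ball (fst (zr Q)) (snd (zr Q))" for Q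
  define X where "X Q = wmeas w Q / emeasure lebesgue (B Q)" for Q
  define hl where "hl = hl_max (\<lambda>y. indicator R y * w y)"
  have QS: "Q \<in> dyadic_grid \<alpha>" if "Q \<in> G" for Q using that GS SG by blast
  have a: "X Q \<le> hl x" if "Q \<in> G" "x \<in> Q" for Q x
    unfolding X_def hl_def B_def using zr[OF that(1)] sub[OF that(1)] that(2)
    by (intro hl_lower[OF w]) auto
  have b: "(\<Sum>Q\<in>G. X Q * indicator (E Q) x) \<le> hl x * indicator R x" for x
  proof (cases "\<exists>Q1\<in>G. x \<in> E Q1")
    case True
    then obtain Q1 where Q1: "Q1 \<in> G" "x \<in> E Q1" by blast
    have z: "X Q * indicator (E Q) x = 0" if "Q \<in> G - {Q1}" for Q
      using disj[of Q Q1] that Q1 GS by (auto simp: indicator_def)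
    have "(\<Sum>Q\<in>G. X Q * indicator (E Q) x) = X Q1 * indicator (E Q1) x + (\<Sum>Q\<in>G - {Q1}. X Q * indicator (E Q) x)"
      by (rule sum.remove[OF fin Q1(1)])
    also have "\<dots> = X Q1"
    proof -
      have "(\<Sum>Q\<in>G - {Q1}. X Q * indicator (E Q) x) = 0" using z by (intro sum.neutral) blast
      then show ?thesis using Q1 by simp
    qed
    also have "\<dots> \<le> hl x" using a[OF Q1(1)] E[of Q1] Q1 GS by blast
    finally show ?thesis using E[of Q1] Q1 GS sub[OF Q1(1)] by (auto simp: indicator_def)
  next
    case False
    then show ?thesis by (simp add: indicator_def)
  qed
  have Em: "E Q \<in> sets lebesgue" if "Q \<in> G" for Q using E that GS by blast
  have c: "(\<integral>\<^sup>+ x. (\<Sum>Q\<in>G. X Q * indicator (E Q) x) \<partial>lebesgue) = (\<Sum>Q\<in>G. X Q * emeasure lebesgue (E Q))"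
    using Em by (simp add: nn_integral_sum nn_integral_cmult_indicator)
  have d: "(\<Sum>Q\<in>G. X Q * emeasure lebesgue (E Q)) \<le> fw_const \<alpha> w * wmeas w R"
  proof -
    have "(\<Sum>Q\<in>G. X Q * emeasure lebesgue (E Q)) \<le> (\<integral>\<^sup>+ x. hl x * indicator R x \<partial>lebesgue)"
      unfolding c[symmetric] using b by (intro nn_integral_mono) auto
    also have "\<dots> \<le> fw_const \<alpha> w * wmeas w R"
      using fw_bound[OF w fw R] unfolding hl_def by simp
    finally show ?thesis .
  qed
  have e: "ennreal \<eta> * wmeas w Q \<le> ennreal (rho TYPE('n)) * (X Q * emeasure lebesgue (E Q))" if Q: "Q \<in> G" for Q
  proof -
    have Qpos: "0 < emeasure lebesgue Q" and Qfin: "emeasure lebesgue Q < \<infinity>"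
      using cube_props(1,2) grid_rep[OF QS[OF Q]] by metis+
    have Bm: "emeasure lebesgue (B Q) = ennreal (rho TYPE('n)) * emeasure lebesgue Q"
      using zr[OF Q] unfolding B_def by blast
    have rp: "0 < rho TYPE('n)" by (rule rho_pos)
    have B0: "emeasure lebesgue (B Q) \<noteq> 0" using Bm Qpos rp by (simp add: ennreal_zero_less_mult_iff)
    have Bt: "emeasure lebesgue (B Q) \<noteq> top" using Bm Qfin by (simp add: ennreal_mult_eq_top_iff)
    have XB: "X Q * emeasure lebesgue (B Q) = wmeas w Q"
      unfolding X_def using B0 Bt by (simp add: ennreal_divide_times less_top)
    have "ennreal \<eta> * wmeas w Q = ennreal \<eta> * (X Q * (ennreal (rho TYPE('n)) * emeasure lebesgue Q))"
      using XB Bm by simp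
    also have "\<dots> = ennreal (rho TYPE('n)) * (X Q * (ennreal \<eta> * emeasure lebesgue Q))"
      by (simp add: ac_simps)
    also have "\<dots> \<le> ennreal (rho TYPE('n)) * (X Q * emeasure lebesgue (E Q))"
      using E[of Q] Q GS by (intro mult_left_mono) auto
    finally show ?thesis .
  qed
  have "ennreal \<eta> * (\<Sum>Q\<in>G. wmeas w Q) = (\<Sum>Q\<in>G. ennreal \<eta> * wmeas w Q)"
    by (simp add: sum_distrib_left)
  also have "\<dots> \<le> (\<Sum>Q\<in>G. ennreal (rho TYPE('n)) * (X Q * emeasure lebesgue (E Q)))"
    using e by (intro sum_mono) auto
  also have "\<dots> = ennreal (rho TYPE('n)) * (\<Sum>Q\<in>G. X Q * emeasure lebesgue (E Q))"
    by (simp add: sum_distrib_left)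
  also have "\<dots> \<le> ennreal (rho TYPE('n)) * (fw_const \<alpha> w * wmeas w R)"
    using d by (intro mult_left_mono) auto
  finally show ?thesis .
qed


lemma hs_mono: "finite F' \<Longrightarrow> F \<subseteq> F' \<Longrightarrow> hs F x \<le> hs F' x"
  unfolding hs_def by (intro sum_mono2) auto

lemma finite_prefix:
  fixes f :: "nat \<Rightarrow> 'a"
  assumes "finite F" "F \<subseteq> range f"
  shows "\<exists>n. F \<subseteq> f ` {..<n}"
  using assms
proof (induct F rule: finite_induct)
  case empty then show ?case by simp
next
  case (insert a F)
  then obtain n where n: "F \<subseteq> f ` {..<n}" by blast
  obtain m where m: "a = f m" using insert(4) by blast
  have "insert a F \<subseteq> f ` {..<max n (Suc m)}" using n m by auto
  then show ?case by blast
qed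

lemma level_sets:
  assumes "Q0 \<in> sets lebesgue" "\<And>Q. Q \<in> F \<Longrightarrow> Q \<in> sets (lebesgue :: 'a::euclidean_space measure)"
  shows "{x\<in>Q0. t < hs F x} \<in> sets (lebesgue :: 'a measure)"
proof -
  have hm: "hs F \<in> borel_measurable (lebesgue :: 'a measure)" using assms(2) by (intro hs_meas) auto
  have A: "{x\<in>Q0. t < hs F x} = Q0 \<inter> {x\<in>space lebesgue. t < hs F x}" by auto
  show ?thesis unfolding A using assms(1) hm by measurable
qed

lemma grid_countable: "countable (dyadic_grid (\<alpha>::real^'n))"
proof -
  have "dyadic_grid \<alpha> = (\<lambda>p. dyadic_cube \<alpha> (fst p) (snd p)) ` (UNIV :: (int \<times> ('n \<Rightarrow> int)) set)"
  proof (intro set_eqI iffI)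
    fix Q assume "Q \<in> dyadic_grid \<alpha>"
    then obtain j k where "Q = dyadic_cube \<alpha> j k" unfolding dyadic_grid_def by blast
    then have "Q = (\<lambda>p. dyadic_cube \<alpha> (fst p) (snd p)) (j, k)" by simp
    then show "Q \<in> (\<lambda>p. dyadic_cube \<alpha> (fst p) (snd p)) ` UNIV" by blast
  next
    fix Q assume "Q \<in> (\<lambda>p. dyadic_cube \<alpha> (fst p) (snd p)) ` (UNIV :: (int \<times> ('n \<Rightarrow> int)) set)"
    then show "Q \<in> dyadic_grid \<alpha>" unfolding dyadic_grid_def by blast
  qed
  then show ?thesis by simp
qed

lemma s_bound:
  fixes K :: real
  assumes K: "1 \<le> K"
  shows "2 / (9 * K) \<le> ln (1 + 1 / (1 + 2 * K))"
proof -
  define y where "y = 1 / (1 + 2 * K)"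
  have y0: "0 \<le> y" "y \<le> 1/3" unfolding y_def using K by (auto simp: field_simps)
  have y1: "1 / (3 * K) \<le> y" unfolding y_def using K by (auto simp: field_simps)
  have "y - y^2 \<le> ln (1 + y)" using y0 by (intro ln_one_plus_pos_lower_bound) auto
  moreover have "2/3 * y \<le> y - y^2"
  proof -
    have "y * (3 * y) \<le> y * 1" using y0 by (intro mult_left_mono) auto
    then have "y^2 \<le> 1/3 * y" by (simp add: power2_eq_square)
    then show ?thesis by simp
  qed
  moreover have "2 / (9 * K) = 2/3 * (1 / (3 * K))" by simp
  moreover have "2/3 * (1 / (3 * K)) \<le> 2/3 * y" using y1 by simp
  ultimately show ?thesis unfolding y_def by linarith
qed


theorem lemma4p3:
  shows "\<exists>\<delta>::real. \<delta> > 0 \<and> (\<exists>C::real. C > 0 \<and>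
    (\<forall>(\<alpha>::real^'n) w S \<eta> Q0 (lam::real).
       admissible_shift \<alpha> \<longrightarrow> is_weight w \<longrightarrow> fw_const \<alpha> w < top \<longrightarrow>
       0 < \<eta> \<longrightarrow> S \<subseteq> dyadic_grid \<alpha> \<longrightarrow> sparse \<eta> S \<longrightarrow> Q0 \<in> S \<longrightarrow> 0 < lam \<longrightarrow>
       wmeas w {x\<in>Q0. ennreal lam < h_count S Q0 x}
         \<le> ennreal (C * exp (- (\<eta> * \<delta> / enn2real (fw_const \<alpha> w)) * lam)) * wmeas w Q0))"
proof -
  define \<delta> where "\<delta> = 1 / (9 * rho TYPE('n))"
  have \<delta>pos: "\<delta> > 0" using rho_pos[where 'n='n] unfolding \<delta>_def by simp
  have main: "wmeas w {x\<in>Q0. ennreal lam < h_count S Q0 x}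
         \<le> ennreal (4 * exp (- (\<eta> * \<delta> / enn2real (fw_const \<alpha> w)) * lam)) * wmeas w Q0"
    if adm: "admissible_shift \<alpha>" and w: "is_weight w" and fw: "fw_const \<alpha> w < top"
      and eta: "0 < \<eta>" and SG: "S \<subseteq> dyadic_grid \<alpha>" and sp: "sparse \<eta> S" and Q0S: "Q0 \<in> S"
      and lam: "0 < lam"
    for \<alpha> :: "real^'n" and w S \<eta> Q0 lam
  proof -
    from sp[unfolded sparse_def] obtain E where Eall:
      "(\<forall>Q\<in>S. E Q \<subseteq> Q \<and> E Q \<in> sets lebesgue \<and> ennreal \<eta> * emeasure lebesgue Q \<le> emeasure lebesgue (E Q))
        \<and> (\<forall>Q\<in>S. \<forall>Q'\<in>S. Q \<noteq> Q' \<longrightarrow> E Q \<inter> E Q' = {})" ..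
    have E: "E Q \<subseteq> Q \<and> E Q \<in> sets lebesgue \<and> ennreal \<eta> * emeasure lebesgue Q \<le> emeasure lebesgue (E Q)"
      if "Q \<in> S" for Q using Eall that by blast
    have disj: "E Q \<inter> E Q' = {}" if "Q \<in> S" "Q' \<in> S" "Q \<noteq> Q'" for Q Q' using Eall that by blast
    define Fr where "Fr = enn2real (fw_const \<alpha> w)"
    have Feq: "fw_const \<alpha> w = ennreal Fr" using fw unfolding Fr_def by simp
    have Fr0: "0 \<le> Fr" unfolding Fr_def by simp
    define \<rho> where "\<rho> = rho TYPE('n)"
    have \<rho>: "0 < \<rho>" using rho_pos unfolding \<rho>_def by blast
    define K where "K = \<rho> * Fr / \<eta>"
    have K0: "0 \<le> K" unfolding K_def using \<rho> Fr0 eta by simp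
    have carl: "(\<Sum>Q\<in>G. wmeas w Q) \<le> ennreal K * wmeas w R"
      if G: "finite G" "G \<subseteq> S" and R: "R \<in> dyadic_grid \<alpha>" and sub: "\<And>Q. Q \<in> G \<Longrightarrow> Q \<subseteq> R" for G R
    proof -
      have c: "ennreal \<eta> * (\<Sum>Q\<in>G. wmeas w Q) \<le> ennreal \<rho> * (ennreal Fr * wmeas w R)"
        using carleson[OF w fw eta E disj SG G R sub] unfolding \<rho>_def Feq by blast
      have inv: "ennreal (1/\<eta>) * ennreal \<eta> = 1" using eta by (simp add: ennreal_mult[symmetric])
      have "(\<Sum>Q\<in>G. wmeas w Q) = ennreal (1/\<eta>) * (ennreal \<eta> * (\<Sum>Q\<in>G. wmeas w Q))"
        by (simp add: mult.assoc[symmetric] inv)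
      also have "\<dots> \<le> ennreal (1/\<eta>) * (ennreal \<rho> * (ennreal Fr * wmeas w R))"
        using c by (intro mult_left_mono) auto
      also have "\<dots> = ennreal K * wmeas w R"
      proof -
        have k1: "ennreal (1/\<eta> * \<rho> * Fr) = ennreal (1/\<eta> * \<rho>) * ennreal Fr"
          by (rule ennreal_mult) (use eta \<rho> Fr0 in auto)
        have k2: "ennreal (1/\<eta> * \<rho>) = ennreal (1/\<eta>) * ennreal \<rho>"
          by (rule ennreal_mult) (use eta \<rho> in auto)
        have Ke: "K = 1/\<eta> * \<rho> * Fr" unfolding K_def by simp
        have kk: "ennreal K = ennreal (1/\<eta>) * ennreal \<rho> * ennreal Fr" unfolding Ke k1 k2 ..
        show ?thesis unfolding kk by (simp only: mult.assoc)
      qed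
      finally show ?thesis .
    qed
    have Q0g: "Q0 \<in> dyadic_grid \<alpha>" using Q0S SG by blast
    have Q0fin: "wmeas w Q0 < \<infinity>" using grid_wfin[OF w Q0g] .
    show ?thesis
    proof (cases "wmeas w Q0 = 0")
      case True
      then have "wmeas w {x\<in>Q0. ennreal lam < h_count S Q0 x} = 0"
        using wmeas_mono[of "{x\<in>Q0. ennreal lam < h_count S Q0 x}" Q0 w] by auto
      then show ?thesis by simp
    next
      case False
      have K1: "1 \<le> K"
      proof (rule ccontr)
        assume "\<not> 1 \<le> K"
        then have "ennreal K < 1" by simp
        then have "ennreal K * wmeas w Q0 < 1 * wmeas w Q0"
          using False Q0fin by (intro ennreal_mult_strict_right_mono) (auto simp: less_top zero_less_iff_neq_zero)
        moreover have "wmeas w Q0 \<le> ennreal K * wmeas w Q0"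
          using carl[of "{Q0}" Q0] Q0S Q0g by auto
        ultimately show False by simp
      qed
      define s where "s = ln (1 + 1 / (1 + 2 * K))"
      have pos1: "0 < 1 + 1 / (1 + 2 * K)" using K0 by (simp add: add_pos_nonneg)
      have s0: "0 \<le> s" unfolding s_def using K0 by simp
      have es: "exp s * (1 + 2*K) \<le> 2 + 2*K"
      proof -
        have "exp s = 1 + 1 / (1 + 2 * K)" unfolding s_def using pos1 by simp
        then show ?thesis using K0 by (simp add: field_simps)
      qed
      define \<mu> where "\<mu> = density lebesgue (\<lambda>x. ennreal (w x))"
      have wm: "(\<lambda>x. ennreal (w x)) \<in> borel_measurable lebesgue"
        using w unfolding is_weight_def by (intro measurable_compose[OF _ measurable_ennreal]) auto
      have \<mu>eq: "emeasure \<mu> A = wmeas w A" if "A \<in> sets lebesgue" for A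
        unfolding \<mu>_def wmeas_alt using emeasure_density[OF wm that] by simp
      have sets\<mu>: "sets \<mu> = sets lebesgue" unfolding \<mu>_def by simp
      define A where "A = {Q\<in>S. Q \<subseteq> Q0}"
      have Agrid: "Q \<in> dyadic_grid \<alpha>" if "Q \<in> A" for Q using that SG unfolding A_def by blast
      have Q0sets: "Q0 \<in> sets lebesgue" using grid_sets[OF Q0g] .
      define t where "t = s * (lam / 2)"
      have fb: "emeasure \<mu> {x\<in>Q0. lam < hs G x} \<le> ennreal (4 * exp (- t)) * wmeas w Q0"
        if G: "finite G" "G \<subseteq> A" for G
      proof -
        define Gp where "Gp p = {Q\<in>G. even (scl \<alpha> Q) = p}" for p :: bool
        have Gpg: "Q \<in> dyadic_grid \<alpha>" if "Q \<in> Gp p" for Q p using that G Agrid unfolding Gp_def by blast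
        have GpS: "Gp p \<subseteq> S" for p using G unfolding Gp_def A_def by blast
        have Gpsub: "Q \<subseteq> Q0" if "Q \<in> Gp p" for Q p using that G unfolding Gp_def A_def by blast
        have Gpfin: "finite (Gp p)" for p using G unfolding Gp_def by simp
        have each: "ennreal (exp (s * (lam/2))) * emeasure \<mu> {x\<in>Q0. lam/2 < hs (Gp p) x} \<le> 2 * emeasure \<mu> Q0" for p
        proof (rule core_markov[where K=K])
          show "finite (Gp p)" by (rule Gpfin)
          show "Q \<in> sets \<mu>" if "Q \<in> Gp p" for Q using grid_sets[OF Gpg[OF that]] sets\<mu> by simp
          show "laminar (Gp p)" unfolding laminar_def
          proof (intro ballI impI)
            fix Q Q' assume "Q \<in> Gp p" "Q' \<in> Gp p" "Q \<inter> Q' \<noteq> {}"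
            then show "Q \<subseteq> Q' \<or> Q' \<subseteq> Q"
              using grid_laminar[OF adm Gpg Gpg] unfolding Gp_def by blast
          qed
          show "(\<Sum>Q'\<in>{Q'\<in>Gp p. Q' \<subset> Q}. emeasure \<mu> Q') \<le> ennreal K * emeasure \<mu> Q" if Q: "Q \<in> Gp p" for Q
          proof -
            have "(\<Sum>Q'\<in>{Q'\<in>Gp p. Q' \<subset> Q}. emeasure \<mu> Q') = (\<Sum>Q'\<in>{Q'\<in>Gp p. Q' \<subset> Q}. wmeas w Q')"
              using Gpg by (intro sum.cong refl \<mu>eq grid_sets) auto
            also have "\<dots> \<le> ennreal K * wmeas w Q"
              using Gpfin GpS by (intro carl Gpg[OF Q]) auto
            also have "\<dots> = ennreal K * emeasure \<mu> Q" using \<mu>eq[OF grid_sets[OF Gpg[OF Q]]] by simp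
            finally show ?thesis .
          qed
          show "0 \<le> K" by (rule K0)
          show "0 \<le> s" by (rule s0)
          show "exp s * (1 + 2*K) \<le> 2 + 2*K" by (rule es)
          show "Q0 \<in> sets \<mu>" using Q0sets sets\<mu> by simp
          show "Q \<subseteq> Q0" if "Q \<in> Gp p" for Q using Gpsub that by blast
          show "(\<Sum>Q\<in>Gp p. emeasure \<mu> Q) \<le> ennreal K * emeasure \<mu> Q0"
          proof -
            have "(\<Sum>Q\<in>Gp p. emeasure \<mu> Q) = (\<Sum>Q\<in>Gp p. wmeas w Q)"
              using Gpg by (intro sum.cong refl \<mu>eq grid_sets) auto
            also have "\<dots> \<le> ennreal K * wmeas w Q0"
              using Gpfin GpS Gpsub by (intro carl Q0g) auto
            also have "\<dots> = ennreal K * emeasure \<mu> Q0" using \<mu>eq[OF Q0sets] by simp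
            finally show ?thesis .
          qed
        qed
        have split: "hs G x = hs (Gp True) x + hs (Gp False) x" for x
        proof -
          have "G = Gp True \<union> Gp False" unfolding Gp_def by auto
          moreover have "Gp True \<inter> Gp False = {}" unfolding Gp_def by auto
          ultimately show ?thesis unfolding hs_def using Gpfin by (metis sum.union_disjoint)
        qed
        define L where "L p = {x\<in>Q0. lam/2 < hs (Gp p) x}" for p
        have Lsets: "L p \<in> sets \<mu>" for p
          unfolding L_def sets\<mu> using Q0sets grid_sets Gpg by (intro level_sets) auto
        have subL: "{x\<in>Q0. lam < hs G x} \<subseteq> L True \<union> L False"
        proof
          fix x assume "x \<in> {x\<in>Q0. lam < hs G x}"
          then have x: "x \<in> Q0" "lam < hs (Gp True) x + hs (Gp False) x" using split[of x] by auto
          then have "lam/2 < hs (Gp True) x \<or> lam/2 < hs (Gp False) x" by linarith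
          then show "x \<in> L True \<union> L False" unfolding L_def using x(1) by blast
        qed
        have inv: "ennreal (exp (- t)) * ennreal (exp t) = 1"
          by (simp add: ennreal_mult[symmetric] exp_minus)
        have Lb: "emeasure \<mu> (L p) \<le> ennreal (exp (- t)) * (2 * wmeas w Q0)" for p
        proof -
          have "emeasure \<mu> (L p) = ennreal (exp (- t)) * (ennreal (exp t) * emeasure \<mu> (L p))"
            by (simp add: mult.assoc[symmetric] inv)
          also have "\<dots> \<le> ennreal (exp (- t)) * (2 * emeasure \<mu> Q0)"
            using each[of p] unfolding L_def t_def by (intro mult_left_mono) auto
          also have "emeasure \<mu> Q0 = wmeas w Q0" using \<mu>eq[OF Q0sets] by simp
          finally show ?thesis .
        qed
        have "emeasure \<mu> {x\<in>Q0. lam < hs G x} \<le> emeasure \<mu> (L True \<union> L False)"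
          using subL Lsets by (intro emeasure_mono) auto
        also have "\<dots> \<le> emeasure \<mu> (L True) + emeasure \<mu> (L False)"
          using Lsets by (intro emeasure_subadditive) auto
        also have "\<dots> \<le> ennreal (exp (- t)) * (2 * wmeas w Q0) + ennreal (exp (- t)) * (2 * wmeas w Q0)"
          using Lb by (intro add_mono) auto
        also have "\<dots> = 2 * (ennreal (exp (- t)) * (2 * wmeas w Q0))"
          by (simp only: mult_2)
        also have "\<dots> = ennreal (4 * exp (- t)) * wmeas w Q0"
          by (simp add: ennreal_mult mult_ac)
        finally show ?thesis .
      qed
      have Ane: "A \<noteq> {}" using Q0S unfolding A_def by blast
      have Acount: "countable A"
        using grid_countable[of \<alpha>] Agrid by (meson countable_subset subsetI)
      define f where "f = from_nat_into A"
      have frange: "range f = A" unfolding f_def using range_from_nat_into[OF Ane Acount] .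
      define Gn where "Gn n = f ` {..<n}" for n
      define Bn where "Bn n = {x\<in>Q0. lam < hs (Gn n) x}" for n
      have GnA: "Gn n \<subseteq> A" for n unfolding Gn_def using frange by blast
      have Gnfin: "finite (Gn n)" for n unfolding Gn_def by simp
      have Bn_sets: "Bn n \<in> sets lebesgue" for n
        unfolding Bn_def using Q0sets grid_sets Agrid GnA by (intro level_sets) blast+
      have inc: "incseq Bn"
      proof (rule monoI)
        fix m n :: nat assume "m \<le> n"
        then have "Gn m \<subseteq> Gn n" unfolding Gn_def by auto
        show "Bn m \<subseteq> Bn n"
        proof
          fix x assume "x \<in> Bn m"
          then have x: "x \<in> Q0" "lam < hs (Gn m) x" unfolding Bn_def by auto
          have "hs (Gn m) x \<le> hs (Gn n) x" by (rule hs_mono[OF Gnfin \<open>Gn m \<subseteq> Gn n\<close>])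
          then show "x \<in> Bn n" using x unfolding Bn_def by auto
        qed
      qed
      have cover: "{x\<in>Q0. ennreal lam < h_count S Q0 x} \<subseteq> (\<Union>n. Bn n)"
      proof
        fix x assume x: "x \<in> {x\<in>Q0. ennreal lam < h_count S Q0 x}"
        have "h_count S Q0 x = (SUP F\<in>{F. finite F \<and> F \<subseteq> A}. sum (\<lambda>Q. indicator Q x :: ennreal) F)"
          unfolding h_count_def A_def by (rule nonneg_infsum_complete) simp
        then have "\<exists>F\<in>{F. finite F \<and> F \<subseteq> A}. ennreal lam < sum (\<lambda>Q. indicator Q x :: ennreal) F"
          using x by (simp add: less_SUP_iff)
        then obtain F where F: "finite F" "F \<subseteq> A" "ennreal lam < sum (\<lambda>Q. indicator Q x :: ennreal) F"
          by blast
        have "sum (\<lambda>Q. indicator Q x :: ennreal) F = sum (\<lambda>Q. ennreal (indicator Q x)) F"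
          by (simp add: ennreal_indicator)
        also have "\<dots> = ennreal (hs F x)" unfolding hs_def by (rule sum_ennreal) simp
        finally have "ennreal lam < ennreal (hs F x)" using F(3) by simp
        then have lF: "lam < hs F x" using lam by (simp add: ennreal_less_iff)
        have "F \<subseteq> range f" using F(2) frange by simp
        then obtain n where "F \<subseteq> f ` {..<n}" using finite_prefix[OF F(1)] by blast
        then have n: "F \<subseteq> Gn n" unfolding Gn_def .
        have "hs F x \<le> hs (Gn n) x" using hs_mono[OF Gnfin n] .
        then have "x \<in> Bn n" using lF x unfolding Bn_def by auto
        then show "x \<in> (\<Union>n. Bn n)" by blast
      qed
      have Fr_pos: "0 < Fr" using K1 unfolding K_def using \<rho> eta Fr0 by (cases "Fr = 0") auto
      have rate: "\<eta> * \<delta> / Fr * lam \<le> t"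
      proof -
        have "\<eta> * \<delta> / Fr = 1 / (9 * K)"
          unfolding \<delta>_def K_def \<rho>_def[symmetric] using eta \<rho> Fr_pos by (simp add: field_simps)
        also have "\<dots> \<le> s / 2" using s_bound[OF K1] unfolding s_def by simp
        finally have r: "\<eta> * \<delta> / Fr \<le> s / 2" .
        have "\<eta> * \<delta> / Fr * lam \<le> s / 2 * lam" using r lam by (intro mult_right_mono) auto
        moreover have "s / 2 * lam = t" unfolding t_def by simp
        ultimately show ?thesis by linarith
      qed
      have "wmeas w {x\<in>Q0. ennreal lam < h_count S Q0 x} \<le> wmeas w (\<Union>n. Bn n)"
        by (rule wmeas_mono[OF cover])
      also have "\<dots> = emeasure \<mu> (\<Union>n. Bn n)" using \<mu>eq Bn_sets by (simp add: sets.countable_UN')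
      also have "\<dots> = (SUP n. emeasure \<mu> (Bn n))"
        using Bn_sets inc sets\<mu> by (intro SUP_emeasure_incseq[symmetric]) auto
      also have "\<dots> \<le> ennreal (4 * exp (- t)) * wmeas w Q0"
        unfolding Bn_def using fb Gnfin GnA by (intro SUP_least) auto
      also have "\<dots> \<le> ennreal (4 * exp (- (\<eta> * \<delta> / enn2real (fw_const \<alpha> w)) * lam)) * wmeas w Q0"
        using rate unfolding Fr_def[symmetric] by (intro mult_right_mono ennreal_leI) auto
      finally show ?thesis .
    qed
  qed
  show ?thesis
    apply (rule exI[of _ \<delta>])
    apply (rule conjI[OF \<delta>pos])
    apply (rule exI[of _ "4::real"])
    apply (rule conjI)
     apply simp
    apply (intro allI impI)
    apply (rule main; assumption)
    done
qed


end
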